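(* Let $D$ be a strongly connected tournament and let $S$ be a minimum feedback arc set of $D$ such that the subdigraph $D_S$ arc-induced by $S$ is a directed path. Let $m=|S|$ and $k\ge 2$. Then $D$ is $k$-AW if and only if $\gcd(k,F_{m+2})=1$.
   Context: A tournament is a digraph in which for every pair of distinct vertices $v,w$ exactly one of $vw$, $wv$ is an arc. Strongly connected: for any two vertices there are directed walks in both directions. For an ordering $\sigma=v_1,\dots,v_n$ of $V(D)$, the feedback arc set with respect to $\sigma$ is the set of arcs $v_jv_i\in A(D)$ with $i<j$; a feedback arc set is one with respect to some ordering; a minimum feedback arc set is one of minimum cardinality over all orderings. For $B\subseteq A(D)$, the arc-induced subdigraph $D_B$ has arc set $B$ and vertex set the vertices incident with arcs of $B$. A directed path is a digraph whose vertices can be ordered $u_1,\dots,u_p$ so that its arc set is exactly $\{u_iu_{i+1}:1\le i\le p-1\}$. Fibonacci numbers: $F_0=0,F_1=1,F_j=F_{j-1}+F_{j-2}$. The $k$-lights out game: start with a labeling $V(D)\to\mathbb{Z}_k$; toggling $v$ increases by $1$ mod $k$ the label of $v$ and of every $w$ with $vw\in A(D)$; the game is won when all labels are $0$. $D$ is $k$-AW if every labeling $V(D)\to\mathbb{Z}_k$ can be brought to the all-zero labeling by toggling. *)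

theory Defs
  imports "HOL-Number_Theory.Fib"
begin

definition tournament :: "'a set \<Rightarrow> ('a \<times> 'a) set \<Rightarrow> bool" where
  "tournament V A \<longleftrightarrow> finite V \<and> A \<subseteq> V \<times> V \<and> (\<forall>v. (v, v) \<notin> A) \<and>
     (\<forall>v\<in>V. \<forall>w\<in>V. v \<noteq> w \<longrightarrow> ((v, w) \<in> A \<longleftrightarrow> (w, v) \<notin> A))"

definition strongly_connected :: "'a set \<Rightarrow> ('a \<times> 'a) set \<Rightarrow> bool" where
  "strongly_connected V A \<longleftrightarrow> (\<forall>v\<in>V. \<forall>w\<in>V. (v, w) \<in> A\<^sup>*)"

definition is_ordering :: "'a set \<Rightarrow> 'a list \<Rightarrow> bool" where
  "is_ordering V \<sigma> \<longleftrightarrow> distinct \<sigma> \<and> set \<sigma> = V"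

definition fas_wrt :: "('a \<times> 'a) set \<Rightarrow> 'a list \<Rightarrow> ('a \<times> 'a) set" where
  "fas_wrt A \<sigma> = {(x, y) \<in> A. \<exists>i j. i < j \<and> j < length \<sigma> \<and> \<sigma> ! j = x \<and> \<sigma> ! i = y}"

definition feedback_arc_set :: "'a set \<Rightarrow> ('a \<times> 'a) set \<Rightarrow> ('a \<times> 'a) set \<Rightarrow> bool" where
  "feedback_arc_set V A S \<longleftrightarrow> (\<exists>\<sigma>. is_ordering V \<sigma> \<and> S = fas_wrt A \<sigma>)"

definition min_feedback_arc_set :: "'a set \<Rightarrow> ('a \<times> 'a) set \<Rightarrow> ('a \<times> 'a) set \<Rightarrow> bool" where
  "min_feedback_arc_set V A S \<longleftrightarrow> feedback_arc_set V A S \<and>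
     (\<forall>S'. feedback_arc_set V A S' \<longrightarrow> card S \<le> card S')"

definition arc_verts :: "('a \<times> 'a) set \<Rightarrow> 'a set" where
  "arc_verts B = fst ` B \<union> snd ` B"

definition is_directed_path :: "'a set \<Rightarrow> ('a \<times> 'a) set \<Rightarrow> bool" where
  "is_directed_path W B \<longleftrightarrow> (\<exists>us. distinct us \<and> set us = W \<and>
      B = {(us ! i, us ! Suc i) | i. Suc i < length us})"

text \<open>Lights out: labels in Z_k represented by integers in {0..<k}.\<close>
definition toggle :: "('a \<times> 'a) set \<Rightarrow> int \<Rightarrow> 'a \<Rightarrow> ('a \<Rightarrow> int) \<Rightarrow> ('a \<Rightarrow> int)" where
  "toggle A k v l = (\<lambda>w. if w = v \<or> (v, w) \<in> A then (l w + 1) mod k else l w)"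

definition play :: "('a \<times> 'a) set \<Rightarrow> int \<Rightarrow> 'a list \<Rightarrow> ('a \<Rightarrow> int) \<Rightarrow> ('a \<Rightarrow> int)" where
  "play A k vs l = foldl (\<lambda>l' v. toggle A k v l') l vs"

definition k_AW :: "nat \<Rightarrow> 'a set \<Rightarrow> ('a \<times> 'a) set \<Rightarrow> bool" where
  "k_AW k V A \<longleftrightarrow> (\<forall>l. (\<forall>v\<in>V. l v \<in> {0..<int k}) \<longrightarrow>
     (\<exists>vs. set vs \<subseteq> V \<and> (\<forall>v\<in>V. play A (int k) vs l v = 0)))"

end

theory Submission
  imports Defs "HOL-Number_Theory.Cong" "HOL-Library.FuncSet"
begin

definition outv :: "nat \<Rightarrow> (nat \<Rightarrow> nat \<Rightarrow> bool) \<Rightarrow> (nat \<Rightarrow> int) \<Rightarrow> nat \<Rightarrow> int" where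
  "outv n R c j = c j + (\<Sum>i<n. if R i j then c i else 0)"

lemma sum_unique:
  fixes m :: nat
  assumes "\<And>t t'. t < m \<Longrightarrow> t' < m \<Longrightarrow> P t \<Longrightarrow> P t' \<Longrightarrow> t = t'"
  shows "(\<Sum>t<m. if P t then (x::int) else 0) = (if \<exists>t<m. P t then x else 0)"
proof (cases "\<exists>t<m. P t")
  case True
  then obtain t0 where t0: "t0 < m" "P t0" by blast
  have "(\<Sum>t<m. if P t then x else 0) = (\<Sum>t<m. if t = t0 then x else 0)"
    by (rule sum.cong) (use assms t0 in auto)
  also have "\<dots> = x" using t0 by (simp add: sum.delta)
  finally show ?thesis using True by simp
qed (auto intro: sum.neutral)

locale pathstruct =
  fixes n m :: nat and p :: "nat \<Rightarrow> nat" and R :: "nat \<Rightarrow> nat \<Rightarrow> bool"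
  assumes gap: "\<And>t. t < m \<Longrightarrow> p t + 2 \<le> p (Suc t)"
    and pm: "p m < n"
    and Rchar: "\<And>i j. i < n \<Longrightarrow> j < n \<Longrightarrow> R i j \<longleftrightarrow>
        ((i < j \<and> \<not>(\<exists>t<m. i = p t \<and> j = p (Suc t))) \<or> (\<exists>t<m. i = p (Suc t) \<and> j = p t))"
begin

lemma p_mono: "a < b \<Longrightarrow> b \<le> m \<Longrightarrow> p a < p b"
proof (induction b)
  case 0 then show ?case by simp
next
  case (Suc b)
  have "p b + 2 \<le> p (Suc b)" using gap Suc.prems by simp
  then show ?case using Suc by (cases "a = b") auto
qed

lemma p_inj: "a \<le> m \<Longrightarrow> b \<le> m \<Longrightarrow> p a = p b \<longleftrightarrow> a = b"
  by (metis linorder_neqE_nat p_mono less_irrefl)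

lemma p_lt_n: "t \<le> m \<Longrightarrow> p t < n"
  using p_mono[of t m] pm by (cases "t = m") auto

lemma Rsplit:
  fixes c :: "nat \<Rightarrow> int"
  assumes "i < n" "j < n"
  shows "(if R i j then c i else 0) = (if i < j then c i else 0)
     + (\<Sum>t<m. if i = p (Suc t) \<and> j = p t then c i else 0)
     - (\<Sum>t<m. if i = p t \<and> j = p (Suc t) then c i else 0)"
proof -
  have u1: "(\<Sum>t<m. if i = p (Suc t) \<and> j = p t then c i else 0)
      = (if \<exists>t<m. i = p (Suc t) \<and> j = p t then c i else 0)"
    by (rule sum_unique) (metis less_imp_le_nat p_inj)
  have u2: "(\<Sum>t<m. if i = p t \<and> j = p (Suc t) then c i else 0)
      = (if \<exists>t<m. i = p t \<and> j = p (Suc t) then c i else 0)"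
    by (rule sum_unique) (metis less_imp_le_nat p_inj)
  have a: "(\<exists>t<m. i = p (Suc t) \<and> j = p t) \<Longrightarrow> j < i"
    using p_mono by (metis Suc_leI lessI)
  have b: "(\<exists>t<m. i = p t \<and> j = p (Suc t)) \<Longrightarrow> i < j"
    using p_mono by (metis Suc_leI lessI)
  have main: "(if R i j then c i else 0) = (if i < j then c i else 0)
     + (if \<exists>t<m. i = p (Suc t) \<and> j = p t then c i else 0)
     - (if \<exists>t<m. i = p t \<and> j = p (Suc t) then c i else 0)"
  proof (cases "\<exists>t<m. i = p (Suc t) \<and> j = p t")
    case True
    then show ?thesis using Rchar[OF assms] a b by auto
  next
    case F1: False
    show ?thesis
    proof (cases "\<exists>t<m. i = p t \<and> j = p (Suc t)")
      case True
      then show ?thesis using Rchar[OF assms] a b F1 by auto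
    next
      case False
      then show ?thesis using Rchar[OF assms] F1 by auto
    qed
  qed
  show ?thesis using main u1 u2 by simp
qed

lemma out_decomp:
  assumes "j < n"
  shows "outv n R c j = sum c {..j} + (\<Sum>t<m. if j = p t then c (p (Suc t)) else 0)
      - (\<Sum>t<m. if j = p (Suc t) then c (p t) else 0)"
proof -
  have "(\<Sum>i<n. if R i j then c i else 0) = (\<Sum>i<n. (if i < j then c i else 0)
     + (\<Sum>t<m. if i = p (Suc t) \<and> j = p t then c i else 0)
     - (\<Sum>t<m. if i = p t \<and> j = p (Suc t) then c i else 0))"
    by (rule sum.cong[OF refl], rule Rsplit) (simp_all add: assms)
  also have "\<dots> = (\<Sum>i<n. if i < j then c i else 0)
     + (\<Sum>i<n. \<Sum>t<m. if i = p (Suc t) \<and> j = p t then c i else 0)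
     - (\<Sum>i<n. \<Sum>t<m. if i = p t \<and> j = p (Suc t) then c i else 0)"
    by (simp add: sum.distrib sum_subtractf)
  also have "(\<Sum>i<n. if i < j then c i else 0) = sum c {..<j}"
  proof -
    have "(\<Sum>i<n. if i < j then c i else 0) = (\<Sum>i<n. if i \<in> {..<j} then c i else 0)" by simp
    also have "\<dots> = sum c ({..<n} \<inter> {..<j})" by (rule sum.inter_restrict[symmetric]) simp
    also have "{..<n} \<inter> {..<j} = {..<j}" using assms by auto
    finally show ?thesis .
  qed
  also have "(\<Sum>i<n. \<Sum>t<m. if i = p (Suc t) \<and> j = p t then c i else 0)
      = (\<Sum>t<m. if j = p t then c (p (Suc t)) else 0)"
  proof -
    have "(\<Sum>i<n. \<Sum>t<m. if i = p (Suc t) \<and> j = p t then c i else 0)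
       = (\<Sum>t<m. \<Sum>i<n. if i = p (Suc t) \<and> j = p t then c i else 0)"
      by (rule sum.swap)
    also have "\<dots> = (\<Sum>t<m. if j = p t then c (p (Suc t)) else 0)"
    proof (rule sum.cong)
      fix t assume "t \<in> {..<m}"
      then have "p (Suc t) < n" using p_lt_n by simp
      then show "(\<Sum>i<n. if i = p (Suc t) \<and> j = p t then c i else 0) =
         (if j = p t then c (p (Suc t)) else 0)"
        by (cases "j = p t") simp_all
    qed simp
    finally show ?thesis .
  qed
  also have "(\<Sum>i<n. \<Sum>t<m. if i = p t \<and> j = p (Suc t) then c i else 0)
      = (\<Sum>t<m. if j = p (Suc t) then c (p t) else 0)"
  proof -
    have "(\<Sum>i<n. \<Sum>t<m. if i = p t \<and> j = p (Suc t) then c i else 0)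
       = (\<Sum>t<m. \<Sum>i<n. if i = p t \<and> j = p (Suc t) then c i else 0)"
      by (rule sum.swap)
    also have "\<dots> = (\<Sum>t<m. if j = p (Suc t) then c (p t) else 0)"
    proof (rule sum.cong)
      fix t assume "t \<in> {..<m}"
      then have "p t < n" using p_lt_n by simp
      then show "(\<Sum>i<n. if i = p t \<and> j = p (Suc t) then c i else 0) =
         (if j = p (Suc t) then c (p t) else 0)"
        by (cases "j = p (Suc t)") simp_all
    qed simp
    finally show ?thesis .
  qed
  finally have "(\<Sum>i<n. if R i j then c i else 0) = sum c {..<j} + (\<Sum>t<m. if j = p t then c (p (Suc t)) else 0)
      - (\<Sum>t<m. if j = p (Suc t) then c (p t) else 0)" .
  moreover have "sum c {..j} = c j + sum c {..<j}"
    by (simp add: lessThan_Suc_atMost[symmetric])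
  ultimately show ?thesis unfolding outv_def by simp
qed

lemma out_ord:
  assumes "j < n" "\<forall>t\<le>m. j \<noteq> p t"
  shows "outv n R c j = sum c {..j}"
proof -
  have "(\<Sum>t<m. if j = p t then c (p (Suc t)) else 0) = 0"
    by (rule sum.neutral) (use assms in auto)
  moreover have "(\<Sum>t<m. if j = p (Suc t) then c (p t) else 0) = 0"
    by (rule sum.neutral) (use assms in auto)
  ultimately show ?thesis using out_decomp[OF assms(1)] by simp
qed

lemma out_path:
  assumes "t \<le> m"
  shows "outv n R c (p t) = sum c {..p t} + (if t < m then c (p (Suc t)) else 0)
     - (if 0 < t then c (p (t - 1)) else 0)"
proof -
  have "(\<Sum>s<m. if p t = p s then c (p (Suc s)) else 0) = (\<Sum>s<m. if s = t then c (p (Suc s)) else 0)"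
    by (rule sum.cong) (use assms p_inj in auto)
  also have "\<dots> = (if t < m then c (p (Suc t)) else 0)" by simp
  finally have 1: "(\<Sum>s<m. if p t = p s then c (p (Suc s)) else 0) = (if t < m then c (p (Suc t)) else 0)" .
  have "(\<Sum>s<m. if p t = p (Suc s) then c (p s) else 0) = (\<Sum>s<m. if s = t - 1 \<and> 0 < t then c (p s) else 0)"
    by (rule sum.cong) (use assms p_inj in auto)
  also have "\<dots> = (if 0 < t then c (p (t - 1)) else 0)" using assms
    by (cases "0 < t") auto
  finally have 2: "(\<Sum>s<m. if p t = p (Suc s) then c (p s) else 0) = (if 0 < t then c (p (t - 1)) else 0)" .
  show ?thesis using out_decomp[OF p_lt_n[OF assms], of c] 1 2 by simp
qed

lemma p_le: "a \<le> b \<Longrightarrow> b \<le> m \<Longrightarrow> p a \<le> p b"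
  using p_mono[of a b] by (cases "a = b") auto

lemma before_path_ord:
  assumes "t \<le> m" "0 < p t"
  shows "\<forall>s\<le>m. p t - 1 \<noteq> p s"
proof (intro allI impI)
  fix s assume s: "s \<le> m"
  show "p t - 1 \<noteq> p s"
  proof
    assume eq: "p t - 1 = p s"
    then have lt: "p s < p t" using assms by simp
    have "s < t"
    proof (rule ccontr)
      assume "\<not> s < t"
      then have "t \<le> s" by simp
      then have "p t \<le> p s" using p_le s by blast
      then show False using lt by simp
    qed
    then have "s \<le> t - 1" "t - 1 < m" using assms by auto
    then have "p s \<le> p (t - 1)" "p (t - 1) + 2 \<le> p (Suc (t - 1))"
      using p_le gap by auto
    moreover have "Suc (t - 1) = t" using \<open>s < t\<close> by simp
    ultimately show False using eq assms by simp
  qed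
qed

lemma ord_zero:
  fixes k \<beta> :: int and c :: "nat \<Rightarrow> int"
  assumes h: "\<forall>j<n. [outv n R c j = (if j = p m then \<beta> else 0)] (mod k)"
    and j: "j < n" "\<forall>t\<le>m. j \<noteq> p t"
  shows "[sum c {..j} = 0] (mod k)"
proof -
  have "j \<noteq> p m" using j by simp
  then show ?thesis using h j out_ord[OF j, of c] by auto
qed

lemma cp:
  fixes k \<beta> :: int and c :: "nat \<Rightarrow> int"
  assumes h: "\<forall>j<n. [outv n R c j = (if j = p m then \<beta> else 0)] (mod k)"
    and t: "t \<le> m"
  shows "[c (p t) = sum c {..p t}] (mod k)"
proof (cases "p t = 0")
  case True
  then show ?thesis by simp
next
  case False
  then obtain q where q: "p t = Suc q" by (cases "p t") auto
  have "q < n" using p_lt_n[OF t] q by simp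
  moreover have "\<forall>s\<le>m. q \<noteq> p s" using before_path_ord[OF t] q by simp
  ultimately have "[sum c {..q} = 0] (mod k)" using ord_zero[OF h] by blast
  then have "[c (p t) + sum c {..q} = c (p t) + 0] (mod k)" by (intro cong_add) auto
  then have "[sum c {..p t} = c (p t)] (mod k)" using q by (simp add: add.commute)
  then show ?thesis by (rule cong_sym)
qed

lemma fib_sign_rec:
  "(-1::int) ^ Suc (Suc s) * int (fib (Suc (Suc (Suc s)))) =
     (-1) ^ s * int (fib (Suc s)) - (-1) ^ Suc s * int (fib (Suc (Suc s)))"
  by (simp add: algebra_simps)

lemma key:
  fixes k \<beta> :: int and c :: "nat \<Rightarrow> int"
  assumes h: "\<forall>j<n. [outv n R c j = (if j = p m then \<beta> else 0)] (mod k)"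
  shows "\<forall>t\<le>m. [sum c {..p t} = (-1)^t * int (fib (Suc t)) * sum c {..p 0}] (mod k)"
    and "[(-1)^m * int (fib (m+2)) * sum c {..p 0} = \<beta>] (mod k)"
proof -
  define x where "x t = sum c {..p t}" for t
  define f where "f t = (-1::int)^t * int (fib (Suc t)) * x 0" for t
  have eq: "[x t + (if t < m then x (Suc t) else 0) - (if 0 < t then x (t - 1) else 0)
      = (if t = m then \<beta> else 0)] (mod k)" if t: "t \<le> m" for t
  proof -
    have 1: "[(if t < m then c (p (Suc t)) else 0) = (if t < m then x (Suc t) else 0)] (mod k)"
      using cp[OF h, of "Suc t"] unfolding x_def by auto
    have 2: "[(if 0 < t then c (p (t - 1)) else 0) = (if 0 < t then x (t - 1) else 0)] (mod k)"
      using cp[OF h, of "t - 1"] t unfolding x_def by auto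
    have 3: "[outv n R c (p t) = x t + (if t < m then x (Suc t) else 0) - (if 0 < t then x (t - 1) else 0)] (mod k)"
      unfolding out_path[OF t] x_def[symmetric] by (intro cong_add cong_diff 1 2 cong_refl)
    have "p t = p m \<longleftrightarrow> t = m" using p_inj t by simp
    then have 4: "[outv n R c (p t) = (if t = m then \<beta> else 0)] (mod k)"
      using h p_lt_n[OF t] by auto
    show ?thesis using 3 4 by (meson cong_sym cong_trans)
  qed
  have rec: "t \<le> m \<longrightarrow> [x t = f t] (mod k)" for t
  proof (induction t rule: less_induct)
    case (less t)
    show ?case
    proof (cases t)
      case 0 then show ?thesis by (simp add: f_def)
    next
      case (Suc t')
      show ?thesis
      proof (cases t')
        case 0
        show ?thesis
        proof
          assume "t \<le> m"
          then have "[x 0 + x 1 - 0 = 0] (mod k)" using eq[of 0] Suc 0 by simp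
          then have "k dvd (x 0 + x 1)" by (simp add: cong_0_iff)
          moreover have "f 1 = - x 0" by (simp add: f_def)
          then have "x 1 - f 1 = x 0 + x 1" by simp
          ultimately have "k dvd (x 1 - f 1)" by metis
          then have "[x 1 = f 1] (mod k)" by (simp only: cong_iff_dvd_diff)
          then show "[x t = f t] (mod k)" using Suc 0 by simp
        qed
      next
        case (Suc s)
        show ?thesis
        proof
          assume tm: "t \<le> m"
          have t: "t = Suc (Suc s)" using Suc \<open>t = Suc t'\<close> by simp
          have "[x (Suc s) + x (Suc (Suc s)) - x s = 0] (mod k)"
            using eq[of "Suc s"] tm t by simp
          then have d1: "k dvd (x (Suc s) + x (Suc (Suc s)) - x s)" by (simp add: cong_0_iff)
          have d2: "k dvd (x s - f s)" using less[of s] tm t by (simp add: cong_iff_dvd_diff)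
          have d3: "k dvd (x (Suc s) - f (Suc s))" using less[of "Suc s"] tm t by (simp add: cong_iff_dvd_diff)
          have fr: "f (Suc (Suc s)) = f s - f (Suc s)"
            unfolding f_def using fib_sign_rec[of s] by (simp add: algebra_simps)
          have "x (Suc (Suc s)) - f (Suc (Suc s)) =
             (x (Suc s) + x (Suc (Suc s)) - x s) + (x s - f s) - (x (Suc s) - f (Suc s))"
            using fr by simp
          moreover have "k dvd ((x (Suc s) + x (Suc (Suc s)) - x s) + (x s - f s) - (x (Suc s) - f (Suc s)))"
            using d1 d2 d3 by (rule dvd_diff[OF dvd_add])
          ultimately have "k dvd (x (Suc (Suc s)) - f (Suc (Suc s)))" by metis
          then show "[x t = f t] (mod k)" using t by (simp add: cong_iff_dvd_diff)
        qed
      qed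
    qed
  qed
  then show "\<forall>t\<le>m. [sum c {..p t} = (-1)^t * int (fib (Suc t)) * sum c {..p 0}] (mod k)"
    unfolding x_def f_def by blast
  show "[(-1)^m * int (fib (m+2)) * sum c {..p 0} = \<beta>] (mod k)"
  proof (cases m)
    case 0
    then have "[x 0 = \<beta>] (mod k)" using eq[of 0] by simp
    then show ?thesis using 0 by (simp add: x_def numeral_2_eq_2)
  next
    case (Suc s)
    then have e: "[x (Suc s) - x s = \<beta>] (mod k)" using eq[of m] by simp
    have d2: "k dvd (x s - f s)" using rec[of s] Suc by (simp add: cong_iff_dvd_diff)
    have d3: "k dvd (x (Suc s) - f (Suc s))" using rec[of "Suc s"] Suc by (simp add: cong_iff_dvd_diff)
    have "k dvd ((x (Suc s) - f (Suc s)) - (x s - f s))" using d2 d3 by simp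
    then have "[x (Suc s) - x s = f (Suc s) - f s] (mod k)"
      by (simp add: cong_iff_dvd_diff algebra_simps)
    then have "[f (Suc s) - f s = \<beta>] (mod k)" using e by (meson cong_sym cong_trans)
    moreover have "f (Suc s) - f s = (-1)^m * int (fib (m+2)) * x 0"
      unfolding f_def using Suc by (simp add: algebra_simps)
    ultimately show ?thesis by (simp add: x_def)
  qed
qed

lemma out_linear: "outv n R (\<lambda>i. c i - d i) j = outv n R c j - outv n R d j"
proof -
  have "(\<Sum>i<n. if R i j then c i - d i else 0) = (\<Sum>i<n. (if R i j then c i else 0) - (if R i j then d i else 0))"
    by (rule sum.cong) auto
  then show ?thesis unfolding outv_def by (simp add: sum_subtractf)
qed

lemma kernel:
  fixes k :: int and c :: "nat \<Rightarrow> int"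
  assumes cop: "coprime k (int (fib (m+2)))" and h: "\<forall>j<n. [outv n R c j = 0] (mod k)"
  shows "\<forall>j<n. [c j = 0] (mod k)"
proof -
  have h': "\<forall>j<n. [outv n R c j = (if j = p m then 0 else 0)] (mod k)" using h by simp
  note K = key[OF h']
  define x0 where "x0 = sum c {..p 0}"
  have "k dvd (int (fib (m+2)) * ((-1)^m * x0))"
    using K(2) unfolding x0_def by (simp add: cong_0_iff algebra_simps)
  then have "k dvd ((-1)^m * x0)" using coprime_dvd_mult_right_iff[OF cop] by blast
  then have d: "k dvd ((-1)^m * ((-1)^m * x0))" by (rule dvd_mult)
  have "(-1::int)^m * ((-1)^m * x0) = ((-1) * (-1))^m * x0"
    by (simp only: power_mult_distrib mult.assoc)
  then have "(-1::int)^m * ((-1)^m * x0) = x0" by simp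
  then have x0: "k dvd x0" using d by simp
  have S: "[sum c {..j} = 0] (mod k)" if j: "j < n" for j
  proof (cases "\<exists>t\<le>m. j = p t")
    case True
    then obtain t where t: "t \<le> m" "j = p t" by blast
    then have "[sum c {..j} = (-1)^t * int (fib (Suc t)) * x0] (mod k)" using K(1) x0_def by simp
    moreover have "[(-1)^t * int (fib (Suc t)) * x0 = 0] (mod k)" using x0 by (simp add: cong_0_iff)
    ultimately show ?thesis by (rule cong_trans)
  next
    case False
    then show ?thesis using ord_zero[OF h' j] by auto
  qed
  show ?thesis
  proof (intro allI impI)
    fix j assume j: "j < n"
    show "[c j = 0] (mod k)"
    proof (cases j)
      case 0 then show ?thesis using S[of 0] j by simp
    next
      case (Suc q)
      have "[sum c {..Suc q} - sum c {..q} = 0 - 0] (mod k)"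
        using S[of "Suc q"] S[of q] j Suc by (intro cong_diff) auto
      then show ?thesis using Suc by simp
    qed
  qed
qed

lemma core:
  fixes k :: int
  assumes k: "k \<ge> 2"
  shows "(\<forall>b. \<exists>c. \<forall>j<n. [outv n R c j = b j] (mod k)) \<longleftrightarrow> coprime k (int (fib (m+2)))"
proof
  assume A: "\<forall>b. \<exists>c. \<forall>j<n. [outv n R c j = b j] (mod k)"
  obtain c where c: "\<forall>j<n. [outv n R c j = (if j = p m then 1 else 0)] (mod k)"
    using A[rule_format, of "\<lambda>j. if j = p m then 1 else 0"] by (elim exE) simp
  have "[(-1)^m * int (fib (m+2)) * sum c {..p 0} = 1] (mod k)" using key(2)[OF c] .
  then have "[1 = (-1)^m * int (fib (m+2)) * sum c {..p 0}] (mod k)" by (rule cong_sym)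
  then have "coprime ((-1)^m * int (fib (m+2)) * sum c {..p 0}) k"
    by (rule cong_imp_coprime) simp
  then have "coprime (int (fib (m+2))) k" by simp
  then show "coprime k (int (fib (m+2)))" by (rule coprime_commute[THEN iffD1])
next
  assume cop: "coprime k (int (fib (m+2)))"
  define D where "D = (\<Pi>\<^sub>E j\<in>{..<n}. {0..<k})"
  define g where "g c = restrict (\<lambda>j. outv n R c j mod k) {..<n}" for c
  have fin: "finite D" unfolding D_def by (intro finite_PiE) auto
  have sub: "g ` D \<subseteq> D"
  proof (rule image_subsetI)
    fix c
    have "\<forall>j\<in>{..<n}. outv n R c j mod k \<in> {0..<k}" using k by simp
    then show "g c \<in> D" unfolding D_def g_def by (simp only: restrict_PiE_iff)
  qed
  have inj: "inj_on g D"
  proof (rule inj_onI)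
    fix c d assume c: "c \<in> D" and d: "d \<in> D" and eq: "g c = g d"
    have "\<forall>j<n. [outv n R (\<lambda>i. c i - d i) j = 0] (mod k)"
    proof (intro allI impI)
      fix j assume j: "j < n"
      have "g c j = g d j" using eq by simp
      then have "outv n R c j mod k = outv n R d j mod k" using j unfolding g_def by simp
      then have "[outv n R c j = outv n R d j] (mod k)" unfolding cong_def .
      then have "[outv n R c j - outv n R d j = outv n R d j - outv n R d j] (mod k)"
        by (rule cong_diff) (rule cong_refl)
      then show "[outv n R (\<lambda>i. c i - d i) j = 0] (mod k)" by (simp only: out_linear diff_self)
    qed
    then have kk: "\<forall>j<n. [c j - d j = 0] (mod k)" using kernel[OF cop] by blast
    show "c = d"
    proof
      fix j show "c j = d j"
      proof (cases "j < n")
        case True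
        then have "k dvd (c j - d j)" using kk by (simp add: cong_0_iff)
        then have "[c j = d j] (mod k)" by (simp add: cong_iff_dvd_diff)
        moreover have "c j \<in> {0..<k}" "d j \<in> {0..<k}"
          using PiE_mem[OF c[unfolded D_def]] PiE_mem[OF d[unfolded D_def]] True by auto
        ultimately show ?thesis by (intro cong_less_imp_eq_int) auto
      next
        case False
        then have "j \<notin> {..<n}" by simp
        then show ?thesis using PiE_arb[OF c[unfolded D_def]] PiE_arb[OF d[unfolded D_def]] by simp
      qed
    qed
  qed
  have surj: "g ` D = D" using endo_inj_surj[OF fin sub inj] .
  show "\<forall>b. \<exists>c. \<forall>j<n. [outv n R c j = b j] (mod k)"
  proof
    fix b
    have "\<forall>j\<in>{..<n}. b j mod k \<in> {0..<k}" using k by simp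
    then have "restrict (\<lambda>j. b j mod k) {..<n} \<in> D" unfolding D_def by (simp only: restrict_PiE_iff)
    then have "restrict (\<lambda>j. b j mod k) {..<n} \<in> g ` D" using surj by simp
    then obtain c where "c \<in> D" and gc: "g c = restrict (\<lambda>j. b j mod k) {..<n}"
      by (elim imageE) simp
    have "\<forall>j<n. outv n R c j mod k = b j mod k"
    proof (intro allI impI)
      fix j assume "j < n"
      then show "outv n R c j mod k = b j mod k" using fun_cong[OF gc, of j] unfolding g_def by simp
    qed
    then show "\<exists>c. \<forall>j<n. [outv n R c j = b j] (mod k)" unfolding cong_def by blast
  qed
qed

end

definition hits :: "('a \<times> 'a) set \<Rightarrow> 'a list \<Rightarrow> 'a \<Rightarrow> nat" where
  "hits A vs w = length (filter (\<lambda>u. u = w \<or> (u, w) \<in> A) vs)"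

lemma play_Cons: "play A k (v # vs) l = play A k vs (toggle A k v l)"
  by (simp add: play_def)

lemma play_mod: "play A k vs l w mod k = (l w + int (hits A vs w)) mod k"
proof (induction vs arbitrary: l)
  case Nil
  then show ?case by (simp add: play_def hits_def)
next
  case (Cons v vs)
  have "play A k (v # vs) l w mod k = (toggle A k v l w + int (hits A vs w)) mod k"
    using Cons.IH[of "toggle A k v l"] by (simp add: play_Cons)
  also have "\<dots> = (toggle A k v l w mod k + int (hits A vs w)) mod k" by (simp add: mod_add_left_eq)
  also have "toggle A k v l w mod k = (l w + (if w = v \<or> (v, w) \<in> A then 1 else 0)) mod k"
    by (simp add: toggle_def)
  also have "((l w + (if w = v \<or> (v, w) \<in> A then 1 else 0)) mod k + int (hits A vs w)) mod k
      = (l w + int (hits A (v # vs) w)) mod k"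
    by (simp add: mod_add_left_eq hits_def algebra_simps)
  finally show ?case .
qed

lemma play_range:
  assumes "0 \<le> l w" "l w < k"
  shows "0 \<le> play A k vs l w \<and> play A k vs l w < k"
  using assms
proof (induction vs arbitrary: l)
  case Nil
  then show ?case by (simp add: play_def)
next
  case (Cons v vs)
  have "0 \<le> toggle A k v l w \<and> toggle A k v l w < k"
    using Cons.prems by (simp add: toggle_def)
  then show ?case using Cons.IH[of "toggle A k v l"] by (simp add: play_Cons)
qed

lemma play_zero_iff:
  assumes "0 \<le> l w" "l w < k"
  shows "play A k vs l w = 0 \<longleftrightarrow> [l w + int (hits A vs w) = 0] (mod k)"
proof -
  have "play A k vs l w = play A k vs l w mod k"
    using play_range[of l w k A vs] assms by simp
  then show ?thesis using play_mod[of A k vs l w] by (simp add: cong_def)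
qed

lemma hits_sum:
  assumes "finite V" "set vs \<subseteq> V"
  shows "hits A vs w = (\<Sum>u\<in>V. if u = w \<or> (u, w) \<in> A then count_list vs u else 0)"
  using assms(2)
proof (induction vs)
  case Nil
  then show ?case by (simp add: hits_def sum.neutral)
next
  case (Cons x vs)
  have xV: "x \<in> V" using Cons.prems by simp
  have "(\<Sum>u\<in>V. if u = w \<or> (u, w) \<in> A then count_list (x # vs) u else 0)
     = (\<Sum>u\<in>V. (if u = w \<or> (u, w) \<in> A then count_list vs u else 0)
          + (if u = x then (if x = w \<or> (x, w) \<in> A then 1 else 0) else 0))"
    by (rule sum.cong) auto
  also have "\<dots> = (\<Sum>u\<in>V. if u = w \<or> (u, w) \<in> A then count_list vs u else 0)
        + (if x = w \<or> (x, w) \<in> A then 1 else 0)"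
    using xV assms(1) by (simp add: sum.distrib)
  finally show ?case using Cons by (simp add: hits_def)
qed

lemma count_replicate: "count_list (replicate n x) u = (if x = u then n else 0)"
  by (induction n) auto

lemma count_concat:
  "count_list (concat (map (\<lambda>i. replicate (f i) (xs ! i)) is)) u
     = sum_list (map (\<lambda>i. if xs ! i = u then f i else 0) is)"
  by (induction "is") (auto simp: count_replicate)

lemma outv_cong:
  assumes "\<forall>i<n. [c i = d i] (mod k)" "j < n"
  shows "[outv n R c j = outv n R d j] (mod k)"
  unfolding outv_def
proof (rule cong_add)
  show "[c j = d j] (mod k)" using assms by simp
  show "[(\<Sum>i<n. if R i j then c i else 0) = (\<Sum>i<n. if R i j then d i else 0)] (mod k)"
    by (rule cong_sum) (use assms in auto)
qed

lemma outv_eq: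
  assumes "\<forall>i<n. c i = d i" "j < n"
  shows "outv n R c j = outv n R d j"
  unfolding outv_def using assms by (auto intro: sum.cong)

lemma hits_pos:
  assumes tour: "tournament V A" and dist: "distinct \<sigma>" and setV: "set \<sigma> = V"
    and vs: "set vs \<subseteq> V" and j: "j < length \<sigma>"
  shows "int (hits A vs (\<sigma> ! j)) = outv (length \<sigma>) (\<lambda>i j. (\<sigma> ! i, \<sigma> ! j) \<in> A)
            (\<lambda>i. int (count_list vs (\<sigma> ! i))) j"
proof -
  let ?n = "length \<sigma>"
  have fin: "finite V" using tour unfolding tournament_def by simp
  have bij: "bij_betw ((!) \<sigma>) {..<?n} V" by (rule bij_betw_nth) (use dist setV in auto)
  have noloop: "(\<sigma> ! j, \<sigma> ! j) \<notin> A" using tour unfolding tournament_def by simp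
  have "hits A vs (\<sigma> ! j) = (\<Sum>u\<in>V. if u = \<sigma> ! j \<or> (u, \<sigma> ! j) \<in> A then count_list vs u else 0)"
    by (rule hits_sum[OF fin vs])
  also have "\<dots> = (\<Sum>i<?n. if \<sigma> ! i = \<sigma> ! j \<or> (\<sigma> ! i, \<sigma> ! j) \<in> A then count_list vs (\<sigma> ! i) else 0)"
    by (rule sum.reindex_bij_betw[OF bij, symmetric])
  also have "\<dots> = (\<Sum>i<?n. (if i = j then count_list vs (\<sigma> ! i) else 0)
        + (if (\<sigma> ! i, \<sigma> ! j) \<in> A then count_list vs (\<sigma> ! i) else 0))"
  proof (rule sum.cong)
    fix i assume "i \<in> {..<?n}"
    then have "\<sigma> ! i = \<sigma> ! j \<longleftrightarrow> i = j" using dist j by (simp add: nth_eq_iff_index_eq)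
    then show "(if \<sigma> ! i = \<sigma> ! j \<or> (\<sigma> ! i, \<sigma> ! j) \<in> A then count_list vs (\<sigma> ! i) else 0) =
         (if i = j then count_list vs (\<sigma> ! i) else 0) + (if (\<sigma> ! i, \<sigma> ! j) \<in> A then count_list vs (\<sigma> ! i) else 0)"
      using noloop by auto
  qed simp
  also have "\<dots> = count_list vs (\<sigma> ! j) + (\<Sum>i<?n. if (\<sigma> ! i, \<sigma> ! j) \<in> A then count_list vs (\<sigma> ! i) else 0)"
    using j by (simp add: sum.distrib)
  finally have e: "hits A vs (\<sigma> ! j) = count_list vs (\<sigma> ! j) + (\<Sum>i<?n. if (\<sigma> ! i, \<sigma> ! j) \<in> A then count_list vs (\<sigma> ! i) else 0)" .
  have "int (\<Sum>i<?n. if (\<sigma> ! i, \<sigma> ! j) \<in> A then count_list vs (\<sigma> ! i) else 0)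
      = (\<Sum>i<?n. if (\<sigma> ! i, \<sigma> ! j) \<in> A then int (count_list vs (\<sigma> ! i)) else 0)"
    by (simp add: of_nat_sum) (rule sum.cong, auto)
  then show ?thesis unfolding outv_def e by simp
qed

lemma kAW_iff_lin:
  assumes tour: "tournament V A" and dist: "distinct \<sigma>" and setV: "set \<sigma> = V" and k: "k \<ge> 1"
  shows "k_AW k V A \<longleftrightarrow> (\<forall>b. \<exists>c. \<forall>j<length \<sigma>. [outv (length \<sigma>) (\<lambda>i j. (\<sigma> ! i, \<sigma> ! j) \<in> A) c j = b j] (mod int k))"
proof
  let ?n = "length \<sigma>"
  let ?R = "\<lambda>i j. (\<sigma> ! i, \<sigma> ! j) \<in> A"
  assume aw: "k_AW k V A"
  show "\<forall>b. \<exists>c. \<forall>j<?n. [outv ?n ?R c j = b j] (mod int k)"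
  proof
    fix b :: "nat \<Rightarrow> int"
    define pos where "pos = the_inv_into {..<?n} ((!) \<sigma>)"
    have inj: "inj_on ((!) \<sigma>) {..<?n}" using dist by (simp add: inj_on_nth)
    have posj: "pos (\<sigma> ! j) = j" if "j < ?n" for j
      unfolding pos_def using the_inv_into_f_f[OF inj] that by simp
    define l where "l u = (- b (pos u)) mod int k" for u
    have lr: "\<forall>v\<in>V. l v \<in> {0..<int k}" using k unfolding l_def by simp
    obtain vs where vs: "set vs \<subseteq> V" and z: "\<forall>v\<in>V. play A (int k) vs l v = 0"
      using aw lr unfolding k_AW_def by blast
    show "\<exists>c. \<forall>j<?n. [outv ?n ?R c j = b j] (mod int k)"
    proof (intro exI allI impI)
      fix j assume j: "j < ?n"
      have w: "\<sigma> ! j \<in> V" using j setV by auto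
      have "0 \<le> l (\<sigma> ! j)" "l (\<sigma> ! j) < int k" using lr w by auto
      then have "[l (\<sigma> ! j) + int (hits A vs (\<sigma> ! j)) = 0] (mod int k)"
        using play_zero_iff[of l "\<sigma> ! j" "int k" A vs] z w by simp
      then have "[(- b j) mod int k + outv ?n ?R (\<lambda>i. int (count_list vs (\<sigma> ! i))) j = 0] (mod int k)"
        using hits_pos[OF tour dist setV vs j] posj[OF j] unfolding l_def by simp
      then have "[- b j + outv ?n ?R (\<lambda>i. int (count_list vs (\<sigma> ! i))) j = 0] (mod int k)"
        by (simp add: cong_def mod_add_left_eq)
      then show "[outv ?n ?R (\<lambda>i. int (count_list vs (\<sigma> ! i))) j = b j] (mod int k)"
        by (simp add: cong_iff_dvd_diff)
    qed
  qed
next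
  let ?n = "length \<sigma>"
  let ?R = "\<lambda>i j. (\<sigma> ! i, \<sigma> ! j) \<in> A"
  assume lin: "\<forall>b. \<exists>c. \<forall>j<?n. [outv ?n ?R c j = b j] (mod int k)"
  show "k_AW k V A"
    unfolding k_AW_def
  proof (intro allI impI)
    fix l :: "'a \<Rightarrow> int" assume lr: "\<forall>v\<in>V. l v \<in> {0..<int k}"
    obtain c where c: "\<forall>j<?n. [outv ?n ?R c j = - l (\<sigma> ! j)] (mod int k)"
      using lin[rule_format, of "\<lambda>j. - l (\<sigma> ! j)"] by (elim exE) simp
    define c' where "c' i = nat (c i mod int k)" for i
    define vs where "vs = concat (map (\<lambda>i. replicate (c' i) (\<sigma> ! i)) [0..<?n])"
    have vsV: "set vs \<subseteq> V"
    proof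
      fix x assume "x \<in> set vs"
      then have "x \<in> (\<Union>i\<in>set [0..<?n]. set (replicate (c' i) (\<sigma> ! i)))"
        unfolding vs_def set_concat set_map by (simp only: image_image)
      then obtain i where "i < ?n" "x \<in> set (replicate (c' i) (\<sigma> ! i))" by auto
      then have "i < ?n" "x = \<sigma> ! i" by simp_all
      then show "x \<in> V" using setV nth_mem by blast
    qed
    have cnt: "count_list vs (\<sigma> ! j) = c' j" if j: "j < ?n" for j
    proof -
      have "count_list vs (\<sigma> ! j) = sum_list (map (\<lambda>i. if \<sigma> ! i = \<sigma> ! j then c' i else 0) [0..<?n])"
        unfolding vs_def by (rule count_concat)
      also have "\<dots> = (\<Sum>i\<in>{0..<?n}. if \<sigma> ! i = \<sigma> ! j then c' i else 0)"
        by (simp add: sum_list_distinct_conv_sum_set)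
      also have "\<dots> = (\<Sum>i\<in>{0..<?n}. if i = j then c' i else 0)"
        by (rule sum.cong) (use dist j in \<open>auto simp: nth_eq_iff_index_eq\<close>)
      also have "\<dots> = c' j" using j by simp
      finally show ?thesis .
    qed
    show "\<exists>vs. set vs \<subseteq> V \<and> (\<forall>v\<in>V. play A (int k) vs l v = 0)"
    proof (intro exI conjI ballI)
      show "set vs \<subseteq> V" by (rule vsV)
      fix v assume v: "v \<in> V"
      then obtain j where j: "j < ?n" "v = \<sigma> ! j" using setV by (auto simp: in_set_conv_nth)
      have h: "int (hits A vs v) = outv ?n ?R (\<lambda>i. int (count_list vs (\<sigma> ! i))) j"
        using hits_pos[OF tour dist setV vsV j(1)] j by simp
      also have "\<dots> = outv ?n ?R (\<lambda>i. int (c' i)) j"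
        by (rule outv_eq) (use cnt j in auto)
      finally have h2: "int (hits A vs v) = outv ?n ?R (\<lambda>i. int (c' i)) j" .
      have ci: "\<forall>i<?n. [int (c' i) = c i] (mod int k)" using k unfolding c'_def by (simp add: cong_def)
      have o1: "[outv ?n ?R (\<lambda>i. int (c' i)) j = outv ?n ?R c j] (mod int k)"
        by (rule outv_cong[OF ci j(1)])
      have o2: "[outv ?n ?R c j = - l v] (mod int k)" using c j by simp
      have "[int (hits A vs v) = - l v] (mod int k)"
        unfolding h2 using o1 o2 by (rule cong_trans)
      then have "[l v + int (hits A vs v) = l v + - l v] (mod int k)" by (intro cong_add) auto
      then have "[l v + int (hits A vs v) = 0] (mod int k)" by simp
      moreover have "0 \<le> l v" "l v < int k" using lr v by auto
      then have "play A (int k) vs l v = 0 \<longleftrightarrow> [l v + int (hits A vs v) = 0] (mod int k)"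
        by (rule play_zero_iff)
      ultimately show "play A (int k) vs l v = 0" by blast
    qed
  qed
qed


lemma fas_mem:
  assumes "distinct \<sigma>" "i < length \<sigma>" "j < length \<sigma>"
  shows "(\<sigma> ! j, \<sigma> ! i) \<in> fas_wrt A \<sigma> \<longleftrightarrow> i < j \<and> (\<sigma> ! j, \<sigma> ! i) \<in> A"
proof
  assume "(\<sigma> ! j, \<sigma> ! i) \<in> fas_wrt A \<sigma>"
  then obtain i' j' where h: "i' < j'" "j' < length \<sigma>" "\<sigma> ! j' = \<sigma> ! j" "\<sigma> ! i' = \<sigma> ! i"
      "(\<sigma> ! j, \<sigma> ! i) \<in> A"
    unfolding fas_wrt_def by auto
  have "j' = j" using h(2,3) assms nth_eq_iff_index_eq by blast
  moreover have "i' = i" using h(1,2,4) assms nth_eq_iff_index_eq by (metis order.strict_trans)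
  ultimately show "i < j \<and> (\<sigma> ! j, \<sigma> ! i) \<in> A" using h by simp
next
  assume "i < j \<and> (\<sigma> ! j, \<sigma> ! i) \<in> A"
  then show "(\<sigma> ! j, \<sigma> ! i) \<in> fas_wrt A \<sigma>" using assms unfolding fas_wrt_def by blast
qed

lemma swap_nth:
  assumes "Suc i < length \<sigma>" "t < length \<sigma>"
  shows "\<sigma>[i := \<sigma> ! Suc i, Suc i := \<sigma> ! i] ! t =
     \<sigma> ! (if t = i then Suc i else if t = Suc i then i else t)"
  using assms by (auto simp: nth_list_update)

lemma swap_fas:
  assumes dist: "distinct \<sigma>" and i: "Suc i < length \<sigma>"
    and e: "(\<sigma> ! Suc i, \<sigma> ! i) \<in> A" and ne: "(\<sigma> ! i, \<sigma> ! Suc i) \<notin> A"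
  shows "fas_wrt A (\<sigma>[i := \<sigma> ! Suc i, Suc i := \<sigma> ! i]) \<subseteq> fas_wrt A \<sigma> - {(\<sigma> ! Suc i, \<sigma> ! i)}"
proof
  let ?s = "\<lambda>t. if t = i then Suc i else if t = Suc i then i else t"
  let ?\<sigma>' = "\<sigma>[i := \<sigma> ! Suc i, Suc i := \<sigma> ! i]"
  fix z assume "z \<in> fas_wrt A ?\<sigma>'"
  then obtain x y a b where z: "z = (x, y)" "(x, y) \<in> A" "a < b" "b < length \<sigma>"
      "?\<sigma>' ! b = x" "?\<sigma>' ! a = y"
    unfolding fas_wrt_def by auto
  have xb: "x = \<sigma> ! ?s b" using z swap_nth[OF i, of b] by simp
  have ya: "y = \<sigma> ! ?s a" using z swap_nth[OF i, of a] by simp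
  have notboth: "\<not> (a = i \<and> b = Suc i)"
  proof
    assume "a = i \<and> b = Suc i"
    then have "x = \<sigma> ! i" "y = \<sigma> ! Suc i" using xb ya by auto
    then show False using z ne by simp
  qed
  have lt: "?s a < ?s b" using notboth z(3) by auto
  have sb: "?s b < length \<sigma>" "?s a < length \<sigma>" using z i by auto
  have "(x, y) \<in> fas_wrt A \<sigma>"
    unfolding fas_wrt_def using z(2) lt sb xb ya by blast
  moreover have "(x, y) \<noteq> (\<sigma> ! Suc i, \<sigma> ! i)"
  proof
    assume "(x, y) = (\<sigma> ! Suc i, \<sigma> ! i)"
    then have "?s b = Suc i" "?s a = i" using xb ya dist sb i by (simp_all add: nth_eq_iff_index_eq)
    then show False using z(3) by (auto split: if_splits)
  qed
  ultimately show "z \<in> fas_wrt A \<sigma> - {(\<sigma> ! Suc i, \<sigma> ! i)}" using z by simp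
qed

lemma card_path:
  assumes "distinct us"
  shows "card {(us ! i, us ! Suc i) | i. Suc i < length us} = length us - 1"
proof -
  have eq: "{(us ! i, us ! Suc i) | i. Suc i < length us} = (\<lambda>i. (us ! i, us ! Suc i)) ` {..<length us - 1}"
    by auto
  have "inj_on (\<lambda>i. (us ! i, us ! Suc i)) {..<length us - 1}"
  proof (rule inj_onI)
    fix a b assume "a \<in> {..<length us - 1}" "b \<in> {..<length us - 1}"
      "(us ! a, us ! Suc a) = (us ! b, us ! Suc b)"
    then show "a = b" using assms by (auto simp: nth_eq_iff_index_eq)
  qed
  then show ?thesis unfolding eq by (simp add: card_image)
qed

lemma path_structure:
  fixes V :: "'a set" and A S :: "('a \<times> 'a) set" and \<sigma> us :: "'a list"
  assumes tour: "tournament V A"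
    and ord\<sigma>: "is_ordering V \<sigma>" and S\<sigma>: "S = fas_wrt A \<sigma>"
    and minS: "\<forall>S'. feedback_arc_set V A S' \<longrightarrow> card S \<le> card S'"
    and dus: "distinct us" and Sus: "S = {(us ! i, us ! Suc i) | i. Suc i < length us}"
    and L: "2 \<le> length us" and usV: "set us \<subseteq> V"
  shows "\<exists>p. pathstruct (length \<sigma>) (length us - 1) p (\<lambda>i j. (\<sigma> ! i, \<sigma> ! j) \<in> A)"
proof -
  define n where "n = length \<sigma>"
  define m where "m = length us - 1"
  have Lm: "length us = Suc m" using L unfolding m_def by simp
  have dist: "distinct \<sigma>" and set\<sigma>: "set \<sigma> = V" using ord\<sigma> unfolding is_ordering_def by auto
  have finV: "finite V" using tour unfolding tournament_def by simp
  have AV: "A \<subseteq> V \<times> V" using tour unfolding tournament_def by simp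
  have noloop: "\<And>v. (v, v) \<notin> A" using tour unfolding tournament_def by simp
  have tourn: "\<And>v w. v \<in> V \<Longrightarrow> w \<in> V \<Longrightarrow> v \<noteq> w \<Longrightarrow> (v, w) \<in> A \<longleftrightarrow> (w, v) \<notin> A"
    using tour unfolding tournament_def by blast
  define pos where "pos x = (SOME i. i < n \<and> \<sigma> ! i = x)" for x
  have pos: "pos x < n \<and> \<sigma> ! pos x = x" if "x \<in> V" for x
  proof -
    have "\<exists>i. i < n \<and> \<sigma> ! i = x" using that set\<sigma> unfolding n_def by (auto simp: in_set_conv_nth)
    then show ?thesis unfolding pos_def by (rule someI_ex)
  qed
  have pos_nth: "pos (\<sigma> ! i) = i" if "i < n" for i
  proof -
    have "\<sigma> ! i \<in> V" using that set\<sigma> unfolding n_def by auto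
    then have "pos (\<sigma> ! i) < n" "\<sigma> ! pos (\<sigma> ! i) = \<sigma> ! i" using pos by auto
    then show ?thesis using that dist unfolding n_def by (simp add: nth_eq_iff_index_eq)
  qed
  define q where "q a = pos (us ! a)" for a
  have q: "q a < n \<and> \<sigma> ! q a = us ! a" if "a \<le> m" for a
    unfolding q_def using pos usV that Lm by (simp add: subset_iff)
  have Sint: "(\<sigma> ! j, \<sigma> ! i) \<in> S \<longleftrightarrow> (\<exists>a<m. j = q a \<and> i = q (Suc a))"
    if ij: "i < n" "j < n" for i j
  proof
    assume "(\<sigma> ! j, \<sigma> ! i) \<in> S"
    then obtain a where a: "Suc a < length us" "\<sigma> ! j = us ! a" "\<sigma> ! i = us ! Suc a"
      using Sus by auto
    then have "a < m" using Lm by simp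
    moreover have "q a = j" unfolding q_def using a(2) pos_nth[OF ij(2)] by simp
    moreover have "q (Suc a) = i" unfolding q_def using a(3) pos_nth[OF ij(1)] by simp
    ultimately show "\<exists>a<m. j = q a \<and> i = q (Suc a)" by auto
  next
    assume "\<exists>a<m. j = q a \<and> i = q (Suc a)"
    then obtain a where a: "a < m" "j = q a" "i = q (Suc a)" by blast
    then have "\<sigma> ! j = us ! a" "\<sigma> ! i = us ! Suc a" using q by auto
    then show "(\<sigma> ! j, \<sigma> ! i) \<in> S" using Sus a Lm by auto
  qed
  have qdec: "q (Suc a) < q a \<and> (\<sigma> ! q a, \<sigma> ! q (Suc a)) \<in> A" if a: "a < m" for a
  proof -
    have "(\<sigma> ! q a, \<sigma> ! q (Suc a)) \<in> S" using Sint[of "q (Suc a)" "q a"] q a by auto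
    then show ?thesis using fas_mem[OF dist, of "q (Suc a)" "q a" A] q a S\<sigma> unfolding n_def by auto
  qed
  define p where "p t = q (m - t)" for t
  have finS: "finite S"
  proof -
    have "S \<subseteq> A" using S\<sigma> unfolding fas_wrt_def by auto
    then show ?thesis using AV finV by (meson finite_SigmaI finite_subset)
  qed
  have gap: "p t + 2 \<le> p (Suc t)" if t: "t < m" for t
  proof (rule ccontr)
    define a where "a = m - Suc t"
    have a: "a < m" "Suc a = m - t" using t unfolding a_def by auto
    have pt: "p t = q (Suc a)" "p (Suc t) = q a" unfolding p_def using a a_def by simp_all
    assume "\<not> p t + 2 \<le> p (Suc t)"
    then have eqi: "q a = Suc (q (Suc a))" using qdec[OF a(1)] pt by simp
    define i where "i = q (Suc a)"
    have i: "Suc i < n" using q[of a] a eqi unfolding i_def by simp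
    have e: "(\<sigma> ! Suc i, \<sigma> ! i) \<in> A" using qdec[OF a(1)] eqi unfolding i_def by simp
    have vi: "\<sigma> ! i \<in> V" "\<sigma> ! Suc i \<in> V" using i set\<sigma> unfolding n_def by auto
    have "\<sigma> ! i \<noteq> \<sigma> ! Suc i" using dist i unfolding n_def by (simp add: nth_eq_iff_index_eq)
    then have ne: "(\<sigma> ! i, \<sigma> ! Suc i) \<notin> A" using tourn[OF vi] e by blast
    define \<sigma>' where "\<sigma>' = \<sigma>[i := \<sigma> ! Suc i, Suc i := \<sigma> ! i]"
    have "is_ordering V \<sigma>'"
      unfolding is_ordering_def \<sigma>'_def using dist set\<sigma> i unfolding n_def
      by (simp add: set_swap)
    then have "feedback_arc_set V A (fas_wrt A \<sigma>')" unfolding feedback_arc_set_def by blast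
    then have c1: "card S \<le> card (fas_wrt A \<sigma>')" using minS by blast
    have sub: "fas_wrt A \<sigma>' \<subseteq> S - {(\<sigma> ! Suc i, \<sigma> ! i)}"
      unfolding \<sigma>'_def S\<sigma> using swap_fas[OF dist _ e ne] i unfolding n_def by simp
    have eS: "(\<sigma> ! Suc i, \<sigma> ! i) \<in> S"
      using fas_mem[OF dist, of i "Suc i" A] e i S\<sigma> unfolding n_def by simp
    have "card (fas_wrt A \<sigma>') \<le> card (S - {(\<sigma> ! Suc i, \<sigma> ! i)})"
      using sub finS by (intro card_mono) auto
    also have "\<dots> < card S" using eS finS by (meson card_Diff1_less)
    finally show False using c1 by simp
  qed
  have pm: "p m < n" unfolding p_def using q[of 0] by simp
  have EX1: "(\<exists>t<m. i = p (Suc t) \<and> j = p t) \<longleftrightarrow> (\<exists>a<m. i = q a \<and> j = q (Suc a))" for i j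
  proof
    assume "\<exists>t<m. i = p (Suc t) \<and> j = p t"
    then obtain t where t: "t < m" "i = p (Suc t)" "j = p t" by blast
    then have "m - Suc t < m" "i = q (m - Suc t)" "j = q (Suc (m - Suc t))"
      unfolding p_def by (auto simp: Suc_diff_Suc)
    then show "\<exists>a<m. i = q a \<and> j = q (Suc a)" by blast
  next
    assume "\<exists>a<m. i = q a \<and> j = q (Suc a)"
    then obtain a where a: "a < m" "i = q a" "j = q (Suc a)" by blast
    then have "m - Suc a < m" "i = p (Suc (m - Suc a))" "j = p (m - Suc a)"
      unfolding p_def by (auto simp: Suc_diff_Suc)
    then show "\<exists>t<m. i = p (Suc t) \<and> j = p t" by blast
  qed
  have Rchar: "(\<sigma> ! i, \<sigma> ! j) \<in> A \<longleftrightarrow>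
        ((i < j \<and> \<not>(\<exists>t<m. i = p t \<and> j = p (Suc t))) \<or> (\<exists>t<m. i = p (Suc t) \<and> j = p t))"
    if ij: "i < n" "j < n" for i j
  proof -
    have r1: "(\<exists>t<m. i = p (Suc t) \<and> j = p t) \<longleftrightarrow> (\<sigma> ! i, \<sigma> ! j) \<in> S"
      using EX1[of i j] Sint[of j i] ij by simp
    have r2: "(\<exists>t<m. i = p t \<and> j = p (Suc t)) \<longleftrightarrow> (\<sigma> ! j, \<sigma> ! i) \<in> S"
      using EX1[of j i] Sint[of i j] ij by blast
    have f1: "(\<sigma> ! i, \<sigma> ! j) \<in> S \<longleftrightarrow> j < i \<and> (\<sigma> ! i, \<sigma> ! j) \<in> A"
      using fas_mem[OF dist, of j i A] ij S\<sigma> unfolding n_def by simp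
    have f2: "(\<sigma> ! j, \<sigma> ! i) \<in> S \<longleftrightarrow> i < j \<and> (\<sigma> ! j, \<sigma> ! i) \<in> A"
      using fas_mem[OF dist, of i j A] ij S\<sigma> unfolding n_def by simp
    have vij: "\<sigma> ! i \<in> V" "\<sigma> ! j \<in> V" using ij set\<sigma> unfolding n_def by auto
    show ?thesis
    proof (cases "i = j")
      case True
      then show ?thesis unfolding r1 r2 f1 f2 using noloop by simp
    next
      case False
      then have "\<sigma> ! i \<noteq> \<sigma> ! j" using dist ij unfolding n_def by (simp add: nth_eq_iff_index_eq)
      then have "(\<sigma> ! i, \<sigma> ! j) \<in> A \<longleftrightarrow> (\<sigma> ! j, \<sigma> ! i) \<notin> A" using tourn[OF vij] by blast
      then show ?thesis unfolding r1 r2 f1 f2 using False by auto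
    qed
  qed
  have "pathstruct n m p (\<lambda>i j. (\<sigma> ! i, \<sigma> ! j) \<in> A)"
    by unfold_locales (use gap pm Rchar in auto)
  then show ?thesis unfolding n_def m_def by blast
qed


theorem mainTheorem7:
  fixes V :: "'a set" and A S :: "('a \<times> 'a) set" and k :: nat
  assumes "tournament V A"
    and "strongly_connected V A"
    and "min_feedback_arc_set V A S"
    and "is_directed_path (arc_verts S) S"
    and "k \<ge> 2"
  shows "k_AW k V A \<longleftrightarrow> gcd k (fib (card S + 2)) = 1"
proof -
  note tour = assms(1)
  obtain \<sigma> where ord\<sigma>: "is_ordering V \<sigma>" and S\<sigma>: "S = fas_wrt A \<sigma>"
    using assms(3) unfolding min_feedback_arc_set_def feedback_arc_set_def by blast
  have minS: "\<forall>S'. feedback_arc_set V A S' \<longrightarrow> card S \<le> card S'"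
    using assms(3) unfolding min_feedback_arc_set_def by blast
  obtain us where dus: "distinct us" and setus: "set us = arc_verts S"
    and Sus: "S = {(us ! i, us ! Suc i) | i. Suc i < length us}"
    using assms(4) unfolding is_directed_path_def by blast
  have dist: "distinct \<sigma>" and set\<sigma>: "set \<sigma> = V" using ord\<sigma> unfolding is_ordering_def by auto
  have k1: "k \<ge> 1" using assms(5) by simp
  have k2: "int k \<ge> 2" using assms(5) by simp
  have AW: "k_AW k V A \<longleftrightarrow> (\<forall>b. \<exists>c. \<forall>j<length \<sigma>. [outv (length \<sigma>) (\<lambda>i j. (\<sigma> ! i, \<sigma> ! j) \<in> A) c j = b j] (mod int k))"
    by (rule kAW_iff_lin[OF tour dist set\<sigma> k1])
  have G: "gcd k (fib (card S + 2)) = 1 \<longleftrightarrow> coprime (int k) (int (fib (card S + 2)))"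
    by (metis coprime_int_iff coprime_iff_gcd_eq_1)
  have AV: "A \<subseteq> V \<times> V" using tour unfolding tournament_def by simp
  have noloop: "\<And>v. (v, v) \<notin> A" using tour unfolding tournament_def by simp
  have tourn: "\<And>v w. v \<in> V \<Longrightarrow> w \<in> V \<Longrightarrow> v \<noteq> w \<Longrightarrow> (v, w) \<in> A \<longleftrightarrow> (w, v) \<notin> A"
    using tour unfolding tournament_def by blast
  show ?thesis
  proof (cases "2 \<le> length us")
    case True
    have "S \<subseteq> A" using S\<sigma> unfolding fas_wrt_def by auto
    then have "arc_verts S \<subseteq> V" using AV unfolding arc_verts_def by auto
    then have usV: "set us \<subseteq> V" using setus by simp
    have cS: "card S = length us - 1" using card_path[OF dus] Sus by simp
    obtain p where P: "pathstruct (length \<sigma>) (length us - 1) p (\<lambda>i j. (\<sigma> ! i, \<sigma> ! j) \<in> A)"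
      using path_structure[OF tour ord\<sigma> S\<sigma> minS dus Sus True usV] by blast
    have C: "(\<forall>b. \<exists>c. \<forall>j<length \<sigma>. [outv (length \<sigma>) (\<lambda>i j. (\<sigma> ! i, \<sigma> ! j) \<in> A) c j = b j] (mod int k))
       \<longleftrightarrow> coprime (int k) (int (fib (card S + 2)))"
      using pathstruct.core[OF P k2] unfolding cS .
    show ?thesis by (simp only: AW G C)
  next
    case False
    then have S0: "S = {}" using Sus by auto
    show ?thesis
    proof (cases "\<sigma> = []")
      case True
      then show ?thesis unfolding AW G S0 by (simp add: numeral_2_eq_2)
    next
      case False
      have R: "(\<sigma> ! i, \<sigma> ! j) \<in> A \<longleftrightarrow> i < j" if ij: "i < length \<sigma>" "j < length \<sigma>" for i j
      proof -
        have f1: "\<not> (j < i \<and> (\<sigma> ! i, \<sigma> ! j) \<in> A)"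
          using fas_mem[OF dist ij(2) ij(1), of A] S\<sigma> S0 by simp
        have f2: "\<not> (i < j \<and> (\<sigma> ! j, \<sigma> ! i) \<in> A)"
          using fas_mem[OF dist ij(1) ij(2), of A] S\<sigma> S0 by simp
        have vij: "\<sigma> ! i \<in> V" "\<sigma> ! j \<in> V" using ij set\<sigma> by auto
        show ?thesis
        proof (cases "i = j")
          case True
          then show ?thesis using noloop by simp
        next
          case False
          then have "\<sigma> ! i \<noteq> \<sigma> ! j" using dist ij by (simp add: nth_eq_iff_index_eq)
          then have "(\<sigma> ! i, \<sigma> ! j) \<in> A \<longleftrightarrow> (\<sigma> ! j, \<sigma> ! i) \<notin> A" using tourn[OF vij] by blast
          then show ?thesis using f1 f2 False by auto
        qed
      qed
      have P: "pathstruct (length \<sigma>) 0 (\<lambda>_. 0) (\<lambda>i j. (\<sigma> ! i, \<sigma> ! j) \<in> A)"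
        by unfold_locales (use False R in auto)
      show ?thesis unfolding AW G S0 using pathstruct.core[OF P k2] by simp
    qed
  qed
qed


end
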